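(* Let $m\ge2$, $R$ a commutative integral domain, and $G=\mathrm{Sp}_{2m}$ realised as below. Let $0\neq r\in R$ and $v=1+r\alpha_{12}\in U_{12}(R)$. Let $\phi(s)=1+s(e_{1,-1}-e_{-2,2})$ for $s\in R$. Then: (1) $\mathrm{Z}(\mathrm{C}_{G(R)}(v))\le\pm U_{12}(R)\cdot\phi(R)$; (2) if $R^*\neq\{\pm1\}$ then $\mathrm{Z}(\mathrm{C}_{G(R)}(v))=\pm U_{12}(R)$; (3) if $R^*=\{\pm1\}$ and $\mathrm{char}(R)\neq2$ then $\mathrm{Z}(\mathrm{C}_{G(R)}(v))=\pm U_{12}(R)\cdot\phi(R)$.
   Context: $\mathrm{Sp}_{2m}$ is the group of $2m\times2m$ matrices preserving the standard alternating form with Gram matrix $\begin{pmatrix}0&I_m\\-I_m&0\end{pmatrix}$; rows and columns are indexed by $1,\ldots,m,-1,\ldots,-m$ (index $-i$ standing for $m+i$). $e_{ij}$ is the matrix unit with $1$ in position $(i,j)$. For $1\le|i|<|j|\le m$, $\alpha_{ij}=e_{ij}+\varepsilon e_{-j,-i}$ with $\varepsilon=-1$ if $ij>0$ and $\varepsilon=1$ if $ij<0$. The short root subgroup is $U_{12}=\{1+c\,\alpha_{12}\}$ and $U_{12}(R)=\{1+c\,\alpha_{12}:c\in R\}$; $\pm H$ denotes $\{\pm h:h\in H\}$; $\mathrm{Z}(\cdot)$ is the centre and $\mathrm{C}$ the centralizer. *)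

theory Defs
  imports Main
begin

text \<open>Matrices of size 2m x 2m over a commutative ring, with rows and columns indexed by
  the integers 1,...,m,-1,...,-m (index -i standing for m+i).\<close>

definition idx :: "nat \<Rightarrow> int set" where
  "idx m = {i. i \<noteq> 0 \<and> \<bar>i\<bar> \<le> int m}"

definition is_mat :: "nat \<Rightarrow> (int \<Rightarrow> int \<Rightarrow> 'a::zero) \<Rightarrow> bool" where
  "is_mat m A \<longleftrightarrow> (\<forall>i j. i \<notin> idx m \<or> j \<notin> idx m \<longrightarrow> A i j = 0)"

definition mmul :: "nat \<Rightarrow> (int \<Rightarrow> int \<Rightarrow> 'a::comm_ring_1) \<Rightarrow> (int \<Rightarrow> int \<Rightarrow> 'a) \<Rightarrow> (int \<Rightarrow> int \<Rightarrow> 'a)" where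
  "mmul m A B = (\<lambda>i j. if i \<in> idx m \<and> j \<in> idx m then (\<Sum>k\<in>idx m. A i k * B k j) else 0)"

definition mone :: "nat \<Rightarrow> (int \<Rightarrow> int \<Rightarrow> 'a::comm_ring_1)" where
  "mone m = (\<lambda>i j. if i \<in> idx m \<and> i = j then 1 else 0)"

definition mtrans :: "(int \<Rightarrow> int \<Rightarrow> 'a) \<Rightarrow> (int \<Rightarrow> int \<Rightarrow> 'a)" where
  "mtrans A = (\<lambda>i j. A j i)"

definition madd :: "(int \<Rightarrow> int \<Rightarrow> 'a::comm_ring_1) \<Rightarrow> (int \<Rightarrow> int \<Rightarrow> 'a) \<Rightarrow> (int \<Rightarrow> int \<Rightarrow> 'a)" where
  "madd A B = (\<lambda>i j. A i j + B i j)"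

definition msmult :: "'a::comm_ring_1 \<Rightarrow> (int \<Rightarrow> int \<Rightarrow> 'a) \<Rightarrow> (int \<Rightarrow> int \<Rightarrow> 'a)" where
  "msmult c A = (\<lambda>i j. c * A i j)"

definition mneg :: "(int \<Rightarrow> int \<Rightarrow> 'a::comm_ring_1) \<Rightarrow> (int \<Rightarrow> int \<Rightarrow> 'a)" where
  "mneg A = (\<lambda>i j. - A i j)"

definition eunit :: "int \<Rightarrow> int \<Rightarrow> (int \<Rightarrow> int \<Rightarrow> 'a::comm_ring_1)" where
  "eunit i j = (\<lambda>a b. if a = i \<and> b = j then 1 else 0)"

text \<open>Gram matrix ((0, I_m), (-I_m, 0)).\<close>
definition gram :: "nat \<Rightarrow> (int \<Rightarrow> int \<Rightarrow> 'a::comm_ring_1)" where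
  "gram m = (\<lambda>i j. if i \<in> idx m \<and> j = - i then (if i > 0 then 1 else -1) else 0)"

definition Sp :: "nat \<Rightarrow> (int \<Rightarrow> int \<Rightarrow> 'a::comm_ring_1) set" where
  "Sp m = {g. is_mat m g \<and> mmul m (mmul m (mtrans g) (gram m)) g = gram m}"

definition alpha :: "int \<Rightarrow> int \<Rightarrow> (int \<Rightarrow> int \<Rightarrow> 'a::comm_ring_1)" where
  "alpha i j = madd (eunit i j) (msmult (if i * j > 0 then -1 else 1) (eunit (-j) (-i)))"

definition U12 :: "nat \<Rightarrow> (int \<Rightarrow> int \<Rightarrow> 'a::comm_ring_1) set" where
  "U12 m = {madd (mone m) (msmult c (alpha 1 2)) | c. True}"

definition phi :: "nat \<Rightarrow> 'a::comm_ring_1 \<Rightarrow> (int \<Rightarrow> int \<Rightarrow> 'a)" where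
  "phi m s = madd (mone m) (msmult s (madd (eunit 1 (-1)) (mneg (eunit (-2) 2))))"

definition pm :: "(int \<Rightarrow> int \<Rightarrow> 'a::comm_ring_1) set \<Rightarrow> (int \<Rightarrow> int \<Rightarrow> 'a) set" where
  "pm H = H \<union> mneg ` H"

definition setmul :: "nat \<Rightarrow> (int \<Rightarrow> int \<Rightarrow> 'a::comm_ring_1) set \<Rightarrow> (int \<Rightarrow> int \<Rightarrow> 'a) set \<Rightarrow> (int \<Rightarrow> int \<Rightarrow> 'a) set" where
  "setmul m A B = {mmul m x y | x y. x \<in> A \<and> y \<in> B}"

definition centralizer :: "nat \<Rightarrow> (int \<Rightarrow> int \<Rightarrow> 'a::comm_ring_1) set \<Rightarrow> (int \<Rightarrow> int \<Rightarrow> 'a) \<Rightarrow> (int \<Rightarrow> int \<Rightarrow> 'a) set" where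
  "centralizer m G v = {g \<in> G. mmul m g v = mmul m v g}"

definition centre :: "nat \<Rightarrow> (int \<Rightarrow> int \<Rightarrow> 'a::comm_ring_1) set \<Rightarrow> (int \<Rightarrow> int \<Rightarrow> 'a) set" where
  "centre m H = {z \<in> H. \<forall>h \<in> H. mmul m z h = mmul m h z}"

end

theory Submission
  imports Defs
begin


lemma idx_finite[simp]: "finite (idx m)"
proof -
  have "idx m \<subseteq> {- int m..int m}" by (auto simp: idx_def)
  then show ?thesis using finite_subset by blast
qed

lemma sum_delta_mult: "finite (S::'b set) \<Longrightarrow> (\<Sum>k\<in>S. (f k::'a::semiring_1) * (if k = a then 1 else 0)) = (if a \<in> S then f a else 0)"
  by (subst sum.cong[OF refl, of _ _ "\<lambda>k. if k = a then f k else 0"]) (auto simp: sum.delta')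
lemma sum_delta_mult2: "finite (S::'b set) \<Longrightarrow> (\<Sum>k\<in>S. (if k = a then 1 else 0) * (f k::'a::semiring_1)) = (if a \<in> S then f a else 0)"
  by (subst sum.cong[OF refl, of _ _ "\<lambda>k. if k = a then f k else 0"]) (auto simp: sum.delta')
lemma is_mat_mmul[simp]: "is_mat m (mmul m A B)"
  by (simp add: is_mat_def mmul_def)
lemma is_mat_mone[simp]: "is_mat m (mone m)"
  by (simp add: is_mat_def mone_def)
lemma is_mat_gram[simp]: "is_mat m (gram m)"
  by (auto simp add: is_mat_def gram_def idx_def)
lemma is_mat_eunit: "a \<in> idx m \<Longrightarrow> b \<in> idx m \<Longrightarrow> is_mat m (eunit a b)"
  by (auto simp add: is_mat_def eunit_def)
lemma is_mat_madd: "is_mat m A \<Longrightarrow> is_mat m B \<Longrightarrow> is_mat m (madd A B)"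
  by (simp add: is_mat_def madd_def)
lemma is_mat_msmult: "is_mat m A \<Longrightarrow> is_mat m (msmult c A)"
  by (simp add: is_mat_def msmult_def)
lemma is_mat_mneg: "is_mat m A \<Longrightarrow> is_mat m (mneg A)"
  by (simp add: is_mat_def mneg_def)
lemma is_mat_mtrans: "is_mat m A \<Longrightarrow> is_mat m (mtrans A)"
  unfolding is_mat_def mtrans_def by blast

lemma mmul_madd_r: "mmul m A (madd B C) = madd (mmul m A B) (mmul m A C)"
  by (rule ext, rule ext) (simp add: mmul_def madd_def distrib_left sum.distrib)
lemma mmul_madd_l: "mmul m (madd A B) C = madd (mmul m A C) (mmul m B C)"
  by (rule ext, rule ext) (simp add: mmul_def madd_def distrib_right sum.distrib)
lemma mmul_msmult_r: "mmul m A (msmult c B) = msmult c (mmul m A B)"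
  by (rule ext, rule ext) (simp add: mmul_def msmult_def sum_distrib_left mult.left_commute)
lemma mmul_msmult_l: "mmul m (msmult c A) B = msmult c (mmul m A B)"
  by (rule ext, rule ext) (simp add: mmul_def msmult_def sum_distrib_left mult.assoc)
lemma mneg_eq: "mneg A = msmult (-1) A"
  by (simp add: mneg_def msmult_def)
lemma msmult_msmult[simp]: "msmult c (msmult d A) = msmult (c*d) A"
  by (simp add: msmult_def mult.assoc)

lemma mmul_mone_r: "is_mat m A \<Longrightarrow> mmul m A (mone m) = A"
  apply (rule ext, rule ext)
  apply (auto simp: mmul_def mone_def is_mat_def)
  apply (subst sum.cong[OF refl, of _ _ "\<lambda>k. if k = _ then A _ k else 0"])
  apply (auto simp: sum.delta')
  done
lemma mmul_mone_l: "is_mat m A \<Longrightarrow> mmul m (mone m) A = A"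
  apply (rule ext, rule ext)
  apply (auto simp: mmul_def mone_def is_mat_def)
  apply (subst sum.cong[OF refl, of _ _ "\<lambda>k. if k = _ then A k _ else 0"])
  apply (auto simp: sum.delta)
  done

lemma mmul_eunit_r: "a \<in> idx m \<Longrightarrow>
   mmul m A (eunit a b) = (\<lambda>i j. if i \<in> idx m \<and> j \<in> idx m \<and> j = b then A i a else 0)"
  apply (rule ext, rule ext)
  apply (auto simp: mmul_def eunit_def)
  apply (subst sum.cong[OF refl, of _ _ "\<lambda>k. if k = a then A _ k else 0"])
  apply (auto simp: sum.delta')
  done
lemma mmul_eunit_l: "b \<in> idx m \<Longrightarrow>
   mmul m (eunit a b) A = (\<lambda>i j. if i \<in> idx m \<and> j \<in> idx m \<and> i = a then A b j else 0)"
  apply (rule ext, rule ext)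
  apply (auto simp: mmul_def eunit_def)
  apply (subst sum.cong[OF refl, of _ _ "\<lambda>k. if k = b then A k _ else 0"])
  apply (auto simp: sum.delta)
  done

lemma eunit_eunit: "a \<in> idx m \<Longrightarrow> b \<in> idx m \<Longrightarrow> c \<in> idx m \<Longrightarrow> d \<in> idx m \<Longrightarrow>
  mmul m (eunit a b) (eunit c d) = msmult (if b = c then 1 else 0) (eunit a d)"
  by (subst mmul_eunit_r, assumption, rule ext, rule ext) (auto simp: msmult_def eunit_def)

lemma gram_eunit: "a \<in> idx m \<Longrightarrow> b \<in> idx m \<Longrightarrow>
  mmul m (gram m) (eunit a b) = msmult (if a < 0 then 1 else -1) (eunit (-a) b)"
  by (subst mmul_eunit_r, assumption, rule ext, rule ext) (auto simp: msmult_def eunit_def gram_def idx_def)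

lemma eunit_gram: "a \<in> idx m \<Longrightarrow> b \<in> idx m \<Longrightarrow>
  mmul m (eunit a b) (gram m) = msmult (if b > 0 then 1 else -1) (eunit a (-b))"
  by (subst mmul_eunit_l, assumption, rule ext, rule ext) (auto simp: msmult_def eunit_def gram_def idx_def)

lemma mtrans_madd: "mtrans (madd A B) = madd (mtrans A) (mtrans B)"
  by (simp add: mtrans_def madd_def)
lemma mtrans_msmult: "mtrans (msmult c A) = msmult c (mtrans A)"
  by (simp add: mtrans_def msmult_def)
lemma mtrans_eunit: "mtrans (eunit a b) = eunit b a"
  by (rule ext, rule ext) (auto simp add: mtrans_def eunit_def)
lemma mtrans_mone: "mtrans (mone m) = mone m"
  by (rule ext, rule ext) (auto simp add: mtrans_def mone_def)




lemmas mat_simps = mmul_madd_r mmul_madd_l mmul_msmult_r mmul_msmult_l mtrans_madd mtrans_msmult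
  mtrans_eunit mtrans_mone eunit_eunit gram_eunit eunit_gram mmul_mone_r mmul_mone_l
  is_mat_madd is_mat_msmult is_mat_eunit

definition NN :: "int \<Rightarrow> int \<Rightarrow> 'a::comm_ring_1" where
  "NN = madd (eunit 1 2) (msmult (-1) (eunit (-2) (-1)))"
definition MM :: "int \<Rightarrow> int \<Rightarrow> 'a::comm_ring_1" where
  "MM = madd (eunit 1 (-1)) (msmult (-1) (eunit (-2) 2))"
definition PW :: "int \<Rightarrow> int \<Rightarrow> 'a::comm_ring_1" where
  "PW = madd (msmult (-1) (eunit 1 1)) (madd (msmult (-1) (eunit 2 2)) (madd (msmult (-1) (eunit (-1) (-1)))
     (madd (msmult (-1) (eunit (-2) (-2))) (madd (eunit (-2) 1) (madd (eunit 1 (-2))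
     (madd (msmult (-1) (eunit (-1) 2)) (msmult (-1) (eunit 2 (-1)))))))))"

lemma idx12: "2 \<le> m \<Longrightarrow> 1 \<in> idx m \<and> -1 \<in> idx m \<and> 2 \<in> idx m \<and> -2 \<in> idx m"
  by (auto simp: idx_def)

lemma PW_sp:
  assumes "2 \<le> m"
  shows "mmul m (mmul m (mtrans (madd (mone m) PW)) (gram m)) (madd (mone m) (PW::int \<Rightarrow> int \<Rightarrow> 'a::comm_ring_1)) = gram m"
  using idx12[OF assms]
  apply (simp add: PW_def mat_simps)
  apply (rule ext, rule ext)
  apply (simp add: madd_def msmult_def eunit_def)
  done

definition PA :: "int \<Rightarrow> int \<Rightarrow> int \<Rightarrow> 'a::comm_ring_1" where
  "PA k = madd (eunit 1 k) (msmult (if k > 0 then -1 else 1) (eunit (-k) (-1)))"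
definition PB :: "int \<Rightarrow> int \<Rightarrow> int \<Rightarrow> 'a::comm_ring_1" where
  "PB k = madd (eunit k 2) (msmult (if k > 0 then -1 else 1) (eunit (-2) (-k)))"
definition PT :: "'a \<Rightarrow> 'a \<Rightarrow> int \<Rightarrow> int \<Rightarrow> 'a::comm_ring_1" where
  "PT u u' = madd (msmult (u-1) (eunit 1 1)) (madd (msmult (u-1) (eunit 2 2))
     (madd (msmult (u'-1) (eunit (-1) (-1))) (msmult (u'-1) (eunit (-2) (-2)))))"
definition ZZ :: "nat \<Rightarrow> 'a \<Rightarrow> 'a \<Rightarrow> 'a \<Rightarrow> int \<Rightarrow> int \<Rightarrow> 'a::comm_ring_1" where
  "ZZ m a p x = madd (msmult a (mone m)) (madd (msmult p NN) (msmult x MM))"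

lemma neg_idx: "k \<in> idx m \<Longrightarrow> -k \<in> idx m"
  by (simp add: idx_def)

lemma PA_sp:
  assumes "2 \<le> m" "k \<in> idx m" "k \<noteq> 1" "k \<noteq> -1" "k \<noteq> 2" "k \<noteq> -2"
  shows "mmul m (mmul m (mtrans (madd (mone m) (PA k))) (gram m)) (madd (mone m) (PA k::int \<Rightarrow> int \<Rightarrow> 'a::comm_ring_1)) = gram m"
  using idx12[OF assms(1)] assms(2-) neg_idx[OF assms(2)] assms(2)[unfolded idx_def]
  apply (cases "0 < k")
  apply (simp_all add: PA_def mat_simps)
  apply (rule ext, rule ext, auto simp add: madd_def msmult_def eunit_def)+
  done

lemma PB_sp:
  assumes "2 \<le> m" "k \<in> idx m" "k \<noteq> 1" "k \<noteq> -1" "k \<noteq> 2" "k \<noteq> -2"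
  shows "mmul m (mmul m (mtrans (madd (mone m) (PB k))) (gram m)) (madd (mone m) (PB k::int \<Rightarrow> int \<Rightarrow> 'a::comm_ring_1)) = gram m"
  using idx12[OF assms(1)] assms(2-) neg_idx[OF assms(2)] assms(2)[unfolded idx_def]
  apply (cases "0 < k")
  apply (simp_all add: PB_def mat_simps)
  apply (rule ext, rule ext, auto simp add: madd_def msmult_def eunit_def)+
  done

lemma PT_sp:
  assumes "2 \<le> m" "u * u' = 1"
  shows "mmul m (mmul m (mtrans (madd (mone m) (PT u u'))) (gram m)) (madd (mone m) (PT u u'::int \<Rightarrow> int \<Rightarrow> 'a::comm_ring_1)) = gram m"
  using idx12[OF assms(1)]
  apply (simp add: PT_def mat_simps)
  apply (rule ext, rule ext)
  apply (auto simp add: madd_def msmult_def eunit_def algebra_simps assms mult.commute[of u' u])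
  done

lemma ZZ_sp:
  assumes "2 \<le> m"
  shows "mmul m (mmul m (mtrans (ZZ m a p x)) (gram m)) (ZZ m a p x) = msmult (a*a) (gram m::int \<Rightarrow> int \<Rightarrow> 'a::comm_ring_1)"
  using idx12[OF assms(1)]
  apply (simp add: ZZ_def NN_def MM_def mat_simps)
  apply (rule ext, rule ext)
  apply (auto simp add: madd_def msmult_def eunit_def gram_def algebra_simps)
  done

lemma PW_comm:
  assumes "2 \<le> m"
  shows "mmul m (madd (mone m) PW) NN = mmul m NN (madd (mone m) (PW::int \<Rightarrow> int \<Rightarrow> 'a::comm_ring_1))"
  using idx12[OF assms(1)]
  apply (simp add: PW_def NN_def mat_simps)
  apply (rule ext, rule ext)
  apply (auto simp add: madd_def msmult_def eunit_def)
  done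

lemma PA_comm:
  assumes "2 \<le> m" "k \<in> idx m" "k \<noteq> 1" "k \<noteq> -1" "k \<noteq> 2" "k \<noteq> -2"
  shows "mmul m (madd (mone m) (PA k)) NN = mmul m NN (madd (mone m) (PA k::int \<Rightarrow> int \<Rightarrow> 'a::comm_ring_1))"
  using idx12[OF assms(1)] assms(2-) neg_idx[OF assms(2)] assms(2)[unfolded idx_def]
  apply (cases "0 < k")
  apply (simp_all add: PA_def NN_def mat_simps)
  apply (rule ext, rule ext, auto simp add: madd_def msmult_def eunit_def)+
  done

lemma PB_comm:
  assumes "2 \<le> m" "k \<in> idx m" "k \<noteq> 1" "k \<noteq> -1" "k \<noteq> 2" "k \<noteq> -2"
  shows "mmul m (madd (mone m) (PB k)) NN = mmul m NN (madd (mone m) (PB k::int \<Rightarrow> int \<Rightarrow> 'a::comm_ring_1))"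
  using idx12[OF assms(1)] assms(2-) neg_idx[OF assms(2)] assms(2)[unfolded idx_def]
  apply (cases "0 < k")
  apply (simp_all add: PB_def NN_def mat_simps)
  apply (rule ext, rule ext, auto simp add: madd_def msmult_def eunit_def)+
  done

lemma PT_comm:
  assumes "2 \<le> m"
  shows "mmul m (madd (mone m) (PT u u')) NN = mmul m NN (madd (mone m) (PT u u'::int \<Rightarrow> int \<Rightarrow> 'a::comm_ring_1))"
  using idx12[OF assms(1)]
  apply (simp add: PT_def NN_def mat_simps)
  apply (rule ext, rule ext)
  apply (auto simp add: madd_def msmult_def eunit_def)
  done

lemma E1_comm:
  assumes "2 \<le> m"
  shows "mmul m (madd (mone m) (eunit 1 (-1))) NN = mmul m NN (madd (mone m) (eunit 1 (-1)::int \<Rightarrow> int \<Rightarrow> 'a::comm_ring_1))"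
  using idx12[OF assms(1)]
  apply (simp add: NN_def mat_simps)
  apply (rule ext, rule ext)
  apply (auto simp add: madd_def msmult_def eunit_def)
  done

lemma E1_sp:
  assumes "2 \<le> m"
  shows "mmul m (mmul m (mtrans (madd (mone m) (eunit 1 (-1)))) (gram m)) (madd (mone m) (eunit 1 (-1)::int \<Rightarrow> int \<Rightarrow> 'a::comm_ring_1)) = gram m"
  using idx12[OF assms(1)]
  apply (simp add: mat_simps)
  apply (rule ext, rule ext)
  apply (auto simp add: madd_def msmult_def eunit_def)
  done

lemma E2_comm:
  assumes "2 \<le> m"
  shows "mmul m (madd (mone m) (eunit (-2) 2)) NN = mmul m NN (madd (mone m) (eunit (-2) 2::int \<Rightarrow> int \<Rightarrow> 'a::comm_ring_1))"
  using idx12[OF assms(1)]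
  apply (simp add: NN_def mat_simps)
  apply (rule ext, rule ext)
  apply (auto simp add: madd_def msmult_def eunit_def)
  done

lemma E2_sp:
  assumes "2 \<le> m"
  shows "mmul m (mmul m (mtrans (madd (mone m) (eunit (-2) 2))) (gram m)) (madd (mone m) (eunit (-2) 2::int \<Rightarrow> int \<Rightarrow> 'a::comm_ring_1)) = gram m"
  using idx12[OF assms(1)]
  apply (simp add: mat_simps)
  apply (rule ext, rule ext)
  apply (auto simp add: madd_def msmult_def eunit_def)
  done

lemma ZZ_comm:
  assumes "2 \<le> m"
  shows "mmul m (ZZ m a p x) NN = mmul m NN (ZZ m a p x::int \<Rightarrow> int \<Rightarrow> 'a::comm_ring_1)"
  using idx12[OF assms(1)]
  apply (simp add: ZZ_def NN_def MM_def mat_simps)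
  apply (rule ext, rule ext)
  apply (auto simp add: madd_def msmult_def eunit_def mone_def)
  done




lemma alpha12: "alpha 1 2 = NN"
  by (simp add: alpha_def NN_def)

lemma is_mat_NN: "2 \<le> m \<Longrightarrow> is_mat m NN"
  using idx12 by (simp add: NN_def is_mat_madd is_mat_msmult is_mat_eunit)
lemma is_mat_MM: "2 \<le> m \<Longrightarrow> is_mat m MM"
  using idx12 by (simp add: MM_def is_mat_madd is_mat_msmult is_mat_eunit)
lemma is_mat_ZZ: "2 \<le> m \<Longrightarrow> is_mat m (ZZ m a p x)"
  by (simp add: ZZ_def is_mat_madd is_mat_msmult is_mat_NN is_mat_MM)
lemma is_mat_PW: "2 \<le> m \<Longrightarrow> is_mat m PW"
  using idx12 by (simp add: PW_def is_mat_madd is_mat_msmult is_mat_eunit)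
lemma is_mat_PT: "2 \<le> m \<Longrightarrow> is_mat m (PT u u')"
  using idx12 by (simp add: PT_def is_mat_madd is_mat_msmult is_mat_eunit)
lemma is_mat_PA: "2 \<le> m \<Longrightarrow> k \<in> idx m \<Longrightarrow> is_mat m (PA k)"
  using idx12 neg_idx by (simp add: PA_def is_mat_madd is_mat_msmult is_mat_eunit)
lemma is_mat_PB: "2 \<le> m \<Longrightarrow> k \<in> idx m \<Longrightarrow> is_mat m (PB k)"
  using idx12 neg_idx by (simp add: PB_def is_mat_madd is_mat_msmult is_mat_eunit)

lemma ZZ_pt: "2 \<le> m \<Longrightarrow> ZZ m a p x i j = (if i \<in> idx m \<and> j \<in> idx m \<and> i = j then a else 0)
   + (if i = 1 \<and> j = 2 then p else 0) - (if i = -2 \<and> j = -1 then p else 0)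
   + (if i = 1 \<and> j = -1 then x else 0) - (if i = -2 \<and> j = 2 then x else 0)"
  by (auto simp add: ZZ_def NN_def MM_def madd_def msmult_def mone_def eunit_def)

lemma cent_char:
  fixes r :: "'a::idom"
  assumes "2 \<le> m" "r \<noteq> 0"
  shows "g \<in> centralizer m (Sp m) (madd (mone m) (msmult r (alpha 1 2))) \<longleftrightarrow> g \<in> Sp m \<and> mmul m g NN = mmul m NN g"
proof -
  have cancel: "\<And>A B. madd g (msmult r A) = madd g (msmult r B) \<longleftrightarrow> A = B"
    using assms(2) by (simp add: madd_def msmult_def fun_eq_iff)
  show ?thesis
  proof (cases "g \<in> Sp m")
    case True
    then have "is_mat m g" by (simp add: Sp_def)
    then have "mmul m g (madd (mone m) (msmult r NN)) = madd g (msmult r (mmul m g NN))"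
      "mmul m (madd (mone m) (msmult r NN)) g = madd g (msmult r (mmul m NN g))"
      by (simp_all add: mmul_madd_r mmul_madd_l mmul_msmult_r mmul_msmult_l mmul_mone_r mmul_mone_l)
    then show ?thesis using True cancel by (simp add: centralizer_def alpha12)
  next
    case False
    then show ?thesis by (simp add: centralizer_def)
  qed
qed

lemma test_entry:
  assumes "is_mat m z" "is_mat m P" "mmul m z (madd (mone m) P) = mmul m (madd (mone m) P) z"
  shows "mmul m z P i j = mmul m P z i j"
proof -
  have "madd z (mmul m z P) = madd z (mmul m P z)"
    using assms by (simp add: mmul_madd_r mmul_madd_l mmul_mone_r mmul_mone_l)
  then have "madd z (mmul m z P) i j = madd z (mmul m P z) i j" by simp
  then show ?thesis by (simp add: madd_def)
qed

lemmas mm_simps = mmul_madd_r mmul_madd_l mmul_msmult_r mmul_msmult_l mmul_eunit_r mmul_eunit_l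

lemma upper:
  fixes r :: "'a::idom" and z :: "int \<Rightarrow> int \<Rightarrow> 'a"
  assumes m2: "2 \<le> m" and r: "r \<noteq> 0"
    and zc: "z \<in> centre m (centralizer m (Sp m) (madd (mone m) (msmult r (alpha 1 2))))"
  shows "\<exists>a p x. a * a = 1 \<and> z = ZZ m a p x"
proof -
  let ?C = "centralizer m (Sp m) (madd (mone m) (msmult r (alpha 1 2)))"
  have zC: "z \<in> ?C" and comm: "\<And>h. h \<in> ?C \<Longrightarrow> mmul m z h = mmul m h z"
    using zc by (auto simp: centre_def)
  have zSp: "z \<in> Sp m" and zN: "mmul m z NN = mmul m NN z"
    using zC cent_char[OF m2 r] by auto
  have zm: "is_mat m z" using zSp by (simp add: Sp_def)
  have id: "1 \<in> idx m" "-1 \<in> idx m" "2 \<in> idx m" "-2 \<in> idx m" using idx12[OF m2] by auto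
  have inC: "madd (mone m) P \<in> ?C" if "is_mat m P"
    "mmul m (mmul m (mtrans (madd (mone m) P)) (gram m)) (madd (mone m) P) = gram m"
    "mmul m (madd (mone m) P) NN = mmul m NN (madd (mone m) P)" for P
    using cent_char[OF m2 r] that by (simp add: Sp_def is_mat_madd)
  have T: "mmul m z P i j = mmul m P z i j" if "is_mat m P"
    "mmul m (mmul m (mtrans (madd (mone m) P)) (gram m)) (madd (mone m) P) = gram m"
    "mmul m (madd (mone m) P) NN = mmul m NN (madd (mone m) P)" for P i j
    using test_entry[OF zm that(1) comm[OF inC[OF that]]] .
  have E1: "mmul m z (eunit 1 (-1)) i j = mmul m (eunit 1 (-1)) z i j" for i j
    by (rule T[OF is_mat_eunit[OF id(1) id(2)] E1_sp[OF m2] E1_comm[OF m2]])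
  have E1': "(if i\<in>idx m \<and> j\<in>idx m \<and> j = -1 then z i 1 else 0) = (if i\<in>idx m \<and> j\<in>idx m \<and> i = 1 then z (-1) j else 0)" for i j
    using E1[of i j] id by (simp add: mmul_eunit_r mmul_eunit_l)
  have c1: "z i 1 = 0" if "i \<in> idx m" "i \<noteq> 1" for i using E1'[of i "-1"] id that by simp
  have r1: "z (-1) j = 0" if "j \<in> idx m" "j \<noteq> -1" for j using E1'[of 1 j] id that by simp
  have d1: "z (-1) (-1) = z 1 1" using E1'[of 1 "-1"] id by simp
  have E2: "mmul m z (eunit (-2) 2) i j = mmul m (eunit (-2) 2) z i j" for i j
    by (rule T[OF is_mat_eunit[OF id(4) id(3)] E2_sp[OF m2] E2_comm[OF m2]])
  have E2': "(if i\<in>idx m \<and> j\<in>idx m \<and> j = 2 then z i (-2) else 0) = (if i\<in>idx m \<and> j\<in>idx m \<and> i = -2 then z 2 j else 0)" for i j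
    using E2[of i j] id by (simp add: mmul_eunit_r mmul_eunit_l)
  have c2: "z i (-2) = 0" if "i \<in> idx m" "i \<noteq> -2" for i using E2'[of i 2] id that by simp
  have r2: "z 2 j = 0" if "j \<in> idx m" "j \<noteq> 2" for j using E2'[of "-2" j] id that by simp
  have d2: "z (-2) (-2) = z 2 2" using E2'[of "-2" 2] id by simp
  have N': "mmul m z NN i j = mmul m NN z i j" for i j using zN by simp
  have d3: "z 2 2 = z 1 1" using N'[of 1 2] id by (simp add: NN_def mm_simps; simp add: madd_def msmult_def)
  define a where "a = z 1 1"
  define p where "p = z 1 2"
  define x where "x = z 1 (-1)"
  have z11: "z 1 1 = a" and z22: "z 2 2 = a" and zm1: "z (-1) (-1) = a" and zm2: "z (-2) (-2) = a"
    using d1 d2 d3 a_def by auto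
  have K: "(\<forall>j\<in>idx m. j \<noteq> k \<and> j \<noteq> -1 \<longrightarrow> z k j = 0) \<and> z k k = a
      \<and> z k (-1) = (if k > 0 then -1 else 1) * z 1 (-k)
      \<and> (\<forall>i\<in>idx m. i \<noteq> 1 \<and> i \<noteq> -k \<longrightarrow> z i (-k) = 0)
      \<and> (\<forall>i\<in>idx m. i \<noteq> k \<and> i \<noteq> -2 \<longrightarrow> z i k = 0)"
    if k: "k \<in> idx m" "k \<noteq> 1" "k \<noteq> -1" "k \<noteq> 2" "k \<noteq> -2" for k
  proof -
    have nk: "-k \<in> idx m" using neg_idx[OF k(1)] .
    have A: "mmul m z (PA k) i j = mmul m (PA k) z i j" for i j
      by (rule T[OF is_mat_PA[OF m2 k(1)] PA_sp[OF m2 k] PA_comm[OF m2 k]])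
    have B: "mmul m z (PB k) i j = mmul m (PB k) z i j" for i j
      by (rule T[OF is_mat_PB[OF m2 k(1)] PB_sp[OF m2 k] PB_comm[OF m2 k]])
    have 1: "\<forall>j\<in>idx m. j \<noteq> k \<and> j \<noteq> -1 \<longrightarrow> z k j = 0"
    proof (intro ballI impI)
      fix j assume "j \<in> idx m" "j \<noteq> k \<and> j \<noteq> -1"
      then show "z k j = 0" using A[of 1 j] id k nk by (simp add: PA_def mm_simps; simp add: madd_def msmult_def)
    qed
    have 2: "z k k = a" using A[of 1 k] id k nk z11 by (simp add: PA_def mm_simps; simp add: madd_def msmult_def)
    have 3: "z k (-1) = (if k > 0 then -1 else 1) * z 1 (-k)"
      using A[of 1 "-1"] id k nk by (simp add: PA_def mm_simps; simp add: madd_def msmult_def; cases "0 < k"; simp)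
    have 4: "\<forall>i\<in>idx m. i \<noteq> 1 \<and> i \<noteq> -k \<longrightarrow> z i (-k) = 0"
    proof (intro ballI impI)
      fix i assume "i \<in> idx m" "i \<noteq> 1 \<and> i \<noteq> -k"
      then show "z i (-k) = 0" using A[of i "-1"] id k nk zm1 by (simp add: PA_def mm_simps; simp add: madd_def msmult_def split: if_splits)
    qed
    have 5: "\<forall>i\<in>idx m. i \<noteq> k \<and> i \<noteq> -2 \<longrightarrow> z i k = 0"
    proof (intro ballI impI)
      fix i assume "i \<in> idx m" "i \<noteq> k \<and> i \<noteq> -2"
      then show "z i k = 0" using B[of i 2] id k nk by (simp add: PB_def mm_simps; simp add: madd_def msmult_def)
    qed
    show ?thesis using 1 2 3 4 5 by blast
  qed
  have other: "k \<in> idx m \<Longrightarrow> k \<notin> {1,-1,2,-2} \<Longrightarrow> -k \<in> idx m \<and> -k \<notin> {1,-1,2,-2}"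
    for k :: int using neg_idx by auto
  have colk: "z i k = (if i = k then a else 0)" if "i \<in> idx m" "k \<in> idx m" "k \<notin> {1,-1,2,-2}" for i k
  proof -
    have Kk: "(\<forall>i\<in>idx m. i \<noteq> k \<and> i \<noteq> -2 \<longrightarrow> z i k = 0) \<and> z k k = a" using K[of k] that by auto
    have Kn: "\<forall>i\<in>idx m. i \<noteq> 1 \<and> i \<noteq> - (-k) \<longrightarrow> z i (- (-k)) = 0" using K[of "-k"] other[of k] that by auto
    show ?thesis using Kk Kn that id by (cases "i = k"; cases "i = -2") auto
  qed
  have rowk: "z k j = (if j = k then a else 0)" if "j \<in> idx m" "k \<in> idx m" "k \<notin> {1,-1,2,-2}" for j k
  proof -
    have Kk: "(\<forall>j\<in>idx m. j \<noteq> k \<and> j \<noteq> -1 \<longrightarrow> z k j = 0) \<and> z k k = a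
       \<and> z k (-1) = (if k > 0 then -1 else 1) * z 1 (-k)" using K[of k] that by auto
    have "z 1 (-k) = 0" using colk[of 1 "-k"] other[of k] that id by auto
    then show ?thesis using Kk that id by (cases "j = k"; cases "j = -1") auto
  qed
  have W: "mmul m z PW i j = mmul m PW z i j" for i j
    by (rule T[OF is_mat_PW[OF m2] PW_sp[OF m2] PW_comm[OF m2]])
  have w1: "z (-2) 2 = - x" using W[of 1 2] id x_def by (simp add: PW_def mm_simps; simp add: madd_def msmult_def algebra_simps)
  have w2: "z (-2) (-1) = - p" using W[of 1 "-1"] id p_def by (simp add: PW_def mm_simps; simp add: madd_def msmult_def algebra_simps)
  have zZ: "z = ZZ m a p x"
  proof (rule ext, rule ext)
    fix i j
    show "z i j = ZZ m a p x i j"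
    proof (cases "i \<in> idx m \<and> j \<in> idx m")
      case False
      then have "z i j = 0" using zm by (auto simp: is_mat_def)
      then show ?thesis using False id by (auto simp: ZZ_pt[OF m2])
    next
      case True
      show ?thesis
      proof (cases "j \<notin> {1,-1,2,-2}")
        case jo: True
        then show ?thesis using colk[of i j] True by (auto simp: ZZ_pt[OF m2])
      next
        case jn: False
        show ?thesis
        proof (cases "i \<notin> {1,-1,2,-2}")
          case io: True
          then show ?thesis using rowk[of j i] True jn by (auto simp: ZZ_pt[OF m2])
        next
          case inn: False
          from jn inn show ?thesis
            using c1 r1 c2 r2 z11 z22 zm1 zm2 w1 w2 id p_def x_def
            by (auto simp: ZZ_pt[OF m2])
        qed
      qed
    qed
  qed
  have "msmult (a*a) (gram m) = (gram m :: int \<Rightarrow> int \<Rightarrow> 'a)"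
    using zSp zZ ZZ_sp[OF m2, of a p x] by (simp add: Sp_def)
  then have "msmult (a*a) (gram m) 1 (-1) = (gram m 1 (-1) :: 'a)" by simp
  then have "a * a = 1" using id by (simp add: msmult_def gram_def)
  then show ?thesis using zZ by blast
qed




lemma unit_alg:
  fixes a b c d :: "'a::idom"
  assumes U: "\<forall>u::'a. u dvd 1 \<longrightarrow> u = 1 \<or> u = -1"
    and h1: "a * d + b * c = 1" and h2: "a * c = 0" and h3: "b * d = 0"
  shows "a = d \<and> b = c"
proof (cases "c = 0")
  case True
  then have ad: "a * d = 1" using h1 by simp
  then have "a dvd 1" by (metis dvdI)
  then have "a = 1 \<or> a = -1" using U by blast
  then have "d = a" using ad by (auto simp: minus_equation_iff[of d])
  moreover have "d \<noteq> 0" using ad by auto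
  then have "b = 0" using h3 by simp
  ultimately show ?thesis using True by simp
next
  case False
  then have a0: "a = 0" using h2 by simp
  then have bc: "b * c = 1" using h1 by simp
  then have "b dvd 1" by (metis dvdI)
  then have "b = 1 \<or> b = -1" using U by blast
  then have "c = b" using bc by (auto simp: minus_equation_iff[of c])
  moreover have "b \<noteq> 0" using bc by auto
  then have "d = 0" using h3 by simp
  ultimately show ?thesis using a0 by simp
qed

lemma sp_inner:
  assumes "l \<in> idx m"
  shows "(\<Sum>k\<in>idx m. mtrans h i k * gram m k l) = h (-l) i * (if -l > 0 then 1 else -1)"
proof -
  have "(\<Sum>k\<in>idx m. mtrans h i k * gram m k l) = (\<Sum>k\<in>idx m. if k = -l then h k i * (if k > 0 then 1 else -1) else 0)"
    by (rule sum.cong) (auto simp: mtrans_def gram_def)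
  also have "\<dots> = h (-l) i * (if -l > 0 then 1 else -1)"
    using neg_idx[OF assms] by (simp add: sum.delta')
  finally show ?thesis .
qed

lemma sp_entry:
  assumes "i \<in> idx m" "j \<in> idx m"
  shows "mmul m (mmul m (mtrans h) (gram m)) h i j = (\<Sum>l\<in>idx m. h (-l) i * (if -l > 0 then 1 else -1) * h l j)"
  using assms by (simp add: mmul_def sp_inner cong: sum.cong)

lemma sum_two:
  assumes "2 \<le> m" "\<And>l. l \<in> idx m \<Longrightarrow> l \<noteq> -1 \<Longrightarrow> l \<noteq> 2 \<Longrightarrow> f l = 0"
  shows "(\<Sum>l\<in>idx m. f l) = f (-1) + (f 2 :: 'a::comm_ring_1)"
proof -
  have "(\<Sum>l\<in>idx m. f l) = (\<Sum>l\<in>{-1,2}. f l)"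
    using idx12[OF assms(1)] assms(2) by (intro sum.mono_neutral_right) auto
  then show ?thesis by simp
qed

lemma hMM:
  fixes h :: "int \<Rightarrow> int \<Rightarrow> 'a::idom"
  assumes m2: "2 \<le> m" and hSp: "h \<in> Sp m" and hN: "mmul m h NN = mmul m NN h"
    and U: "\<forall>u::'a. u dvd 1 \<longrightarrow> u = 1 \<or> u = -1" and two: "(2::'a) \<noteq> 0"
  shows "mmul m h MM = mmul m MM h"
proof -
  have id: "1 \<in> idx m" "-1 \<in> idx m" "2 \<in> idx m" "-2 \<in> idx m" using idx12[OF m2] by auto
  have hm: "is_mat m h" and sp: "mmul m (mmul m (mtrans h) (gram m)) h = gram m" using hSp by (auto simp: Sp_def)
  have N': "mmul m h NN i j = mmul m NN h i j" for i j using hN by simp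
  have c1: "h i 1 = 0" if "i \<in> idx m" "i \<noteq> 1" "i \<noteq> -2" for i
    using N'[of i 2] id that by (simp add: NN_def mm_simps; simp add: madd_def msmult_def)
  have c2: "h i (-2) = 0" if "i \<in> idx m" "i \<noteq> 1" "i \<noteq> -2" for i
    using N'[of i "-1"] id that by (simp add: NN_def mm_simps; simp add: madd_def msmult_def)
  have r1: "h 2 j = 0" if "j \<in> idx m" "j \<noteq> 2" "j \<noteq> -1" for j
    using N'[of 1 j] id that by (simp add: NN_def mm_simps; simp add: madd_def msmult_def)
  have r2: "h (-1) j = 0" if "j \<in> idx m" "j \<noteq> 2" "j \<noteq> -1" for j
    using N'[of "-2" j] id that by (simp add: NN_def mm_simps; simp add: madd_def msmult_def)
  have e1: "h 2 2 = h 1 1" using N'[of 1 2] id by (simp add: NN_def mm_simps; simp add: madd_def msmult_def)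
  have e2: "h (-1) 2 = - h (-2) 1" using N'[of "-2" 2] id by (simp add: NN_def mm_simps; simp add: madd_def msmult_def)
  have e3: "h 2 (-1) = - h 1 (-2)" using N'[of 1 "-1"] id by (simp add: NN_def mm_simps; simp add: madd_def msmult_def)
  have e4: "h (-2) (-2) = h (-1) (-1)" using N'[of "-2" "-1"] id by (simp add: NN_def mm_simps; simp add: madd_def msmult_def)
  have S: "(\<Sum>l\<in>idx m. h (-l) i * (if -l > 0 then 1 else -1) * h l j) = gram m i j"
    if "i \<in> idx m" "j \<in> idx m" for i j
    using sp_entry[OF that, of h] sp by simp
  have s1: "h 1 1 * h (-1) (-1) - h (-2) 1 * h 2 (-1) = 1"
  proof -
    have "(\<Sum>l\<in>idx m. h (-l) 1 * (if -l > 0 then 1 else -1) * h l (-1)) = h 1 1 * h (-1) (-1) - h (-2) 1 * h 2 (-1)"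
      using id by (subst sum_two[OF m2]) (auto simp: c1 neg_idx)
    then show ?thesis using S[of 1 "-1"] id by (simp add: gram_def)
  qed
  have s2: "h 1 1 * h (-1) 2 - h (-2) 1 * h 2 2 = 0"
  proof -
    have "(\<Sum>l\<in>idx m. h (-l) 1 * (if -l > 0 then 1 else -1) * h l 2) = h 1 1 * h (-1) 2 - h (-2) 1 * h 2 2"
      using id by (subst sum_two[OF m2]) (auto simp: c1 neg_idx)
    then show ?thesis using S[of 1 2] id by (simp add: gram_def)
  qed
  have s3: "h 1 (-2) * h (-1) (-1) - h (-2) (-2) * h 2 (-1) = 0"
  proof -
    have "(\<Sum>l\<in>idx m. h (-l) (-2) * (if -l > 0 then 1 else -1) * h l (-1)) = h 1 (-2) * h (-1) (-1) - h (-2) (-2) * h 2 (-1)"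
      using id by (subst sum_two[OF m2]) (auto simp: c2 neg_idx)
    then show ?thesis using S[of "-2" "-1"] id by (simp add: gram_def)
  qed
  define a where "a = h 1 1"
  define d where "d = h (-1) (-1)"
  define b where "b = h 1 (-2)"
  define c where "c = h (-2) 1"
  have q1: "a * d + b * c = 1" using s1 e3 by (simp add: a_def b_def c_def d_def algebra_simps)
  have "2 * (a * c) = 0" using s2 e1 e2 by (simp add: a_def c_def algebra_simps)
  then have q2: "a * c = 0" using two by simp
  have "2 * (b * d) = 0" using s3 e3 e4 by (simp add: b_def d_def algebra_simps)
  then have q3: "b * d = 0" using two by simp
  have ad: "a = d" and bc: "b = c" using unit_alg[OF U q1 q2 q3] by auto
  have L: "mmul m h MM i j = (if i\<in>idx m \<and> j\<in>idx m \<and> j = -1 then h i 1 else 0) - (if i\<in>idx m \<and> j\<in>idx m \<and> j = 2 then h i (-2) else 0)" for i j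
    using id by (simp add: MM_def mm_simps; simp add: madd_def msmult_def)
  have R: "mmul m MM h i j = (if i\<in>idx m \<and> j\<in>idx m \<and> i = 1 then h (-1) j else 0) - (if i\<in>idx m \<and> j\<in>idx m \<and> i = -2 then h 2 j else 0)" for i j
    using id by (simp add: MM_def mm_simps; simp add: madd_def msmult_def)
  show ?thesis
  proof (rule ext, rule ext)
    fix i j
    show "mmul m h MM i j = mmul m MM h i j"
    proof (cases "i \<in> idx m \<and> j \<in> idx m")
      case False then show ?thesis using id by (auto simp add: L R)
    next
      case True
      then have ii: "i \<in> idx m" and jj: "j \<in> idx m" by auto
      show ?thesis
      proof (cases "j = -1")
        case True
        then show ?thesis using ii jj ad bc e3 c1[OF ii] unfolding L R a_def b_def c_def d_def
          by (cases "i = 1"; cases "i = -2") auto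
      next
        case jn1: False
        show ?thesis
        proof (cases "j = 2")
          case True
          then show ?thesis using ii jj ad bc e1 e2 e4 c2[OF ii] unfolding L R a_def b_def c_def d_def
            by (cases "i = 1"; cases "i = -2") auto
        next
          case False
          then show ?thesis using ii jj jn1 r1[OF jj] r2[OF jj] unfolding L R
            by (cases "i = 1"; cases "i = -2") auto
        qed
      qed
    qed
  qed
qed




lemma ZZ_in_centre:
  fixes r :: "'a::idom"
  assumes m2: "2 \<le> m" and r: "r \<noteq> 0" and aa: "a * a = 1"
    and hx: "x = 0 \<or> ((\<forall>u::'a. u dvd 1 \<longrightarrow> u = 1 \<or> u = -1) \<and> (2::'a) \<noteq> 0)"
  shows "ZZ m a p x \<in> centre m (centralizer m (Sp m) (madd (mone m) (msmult r (alpha 1 2))))"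
proof -
  let ?C = "centralizer m (Sp m) (madd (mone m) (msmult r (alpha 1 2)))"
  have "msmult (a*a) (gram m) = (gram m :: int \<Rightarrow> int \<Rightarrow> 'a)"
    using aa by (simp add: msmult_def)
  then have "ZZ m a p x \<in> Sp m" using ZZ_sp[OF m2, of a p x] is_mat_ZZ[OF m2] by (simp add: Sp_def)
  then have zC: "ZZ m a p x \<in> ?C" using cent_char[OF m2 r] ZZ_comm[OF m2] by blast
  have "mmul m (ZZ m a p x) h = mmul m h (ZZ m a p x)" if hC: "h \<in> ?C" for h
  proof -
    have hSp: "h \<in> Sp m" and hN: "mmul m h NN = mmul m NN h" using hC cent_char[OF m2 r] by auto
    have hm: "is_mat m h" using hSp by (simp add: Sp_def)
    have L: "mmul m (ZZ m a p x) h = madd (msmult a h) (madd (msmult p (mmul m NN h)) (msmult x (mmul m MM h)))"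
      using hm by (simp add: ZZ_def mmul_madd_l mmul_msmult_l mmul_mone_l)
    have R: "mmul m h (ZZ m a p x) = madd (msmult a h) (madd (msmult p (mmul m h NN)) (msmult x (mmul m h MM)))"
      using hm by (simp add: ZZ_def mmul_madd_r mmul_msmult_r mmul_mone_r)
    have "msmult x (mmul m MM h) = msmult x (mmul m h MM)"
      using hx hMM[OF m2 hSp hN] by (auto simp: msmult_def)
    then show ?thesis using L R hN by simp
  qed
  then show ?thesis using zC by (simp add: centre_def)
qed

lemma ZZ_mul:
  assumes m2: "2 \<le> m"
  shows "mmul m (ZZ m a p x) (ZZ m b q y) = (ZZ m (a*b) (a*q + p*b) (a*y + x*b) :: int \<Rightarrow> int \<Rightarrow> 'a::comm_ring_1)"
  using idx12[OF m2] is_mat_NN[OF m2] is_mat_MM[OF m2]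
  apply (simp add: ZZ_def mat_simps)
  apply (simp add: NN_def MM_def mat_simps)
  apply (rule ext, rule ext)
  apply (auto simp add: madd_def msmult_def eunit_def mone_def algebra_simps)
  done

lemma U12_ZZ: "2 \<le> m \<Longrightarrow> madd (mone m) (msmult c (alpha 1 2)) = ZZ m 1 c 0"
  by (rule ext, rule ext) (auto simp add: ZZ_pt alpha12 NN_def madd_def msmult_def mone_def eunit_def)

lemma phi_ZZ: "2 \<le> m \<Longrightarrow> phi m s = ZZ m 1 0 s"
  by (rule ext, rule ext) (auto simp add: ZZ_pt phi_def mneg_def madd_def msmult_def mone_def eunit_def)

lemma mneg_ZZ: "mneg (ZZ m a p x) = ZZ m (-a) (-p) (-x)"
  by (rule ext, rule ext) (simp add: ZZ_def mneg_def madd_def msmult_def)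

lemma pm_U12: "2 \<le> m \<Longrightarrow> pm (U12 m) = {ZZ m a c 0 | a c. (a::'a::comm_ring_1) = 1 \<or> a = -1}"
proof -
  assume m2: "2 \<le> m"
  have U: "U12 m = {ZZ m 1 c 0 | c. True}" by (auto simp: U12_def U12_ZZ[OF m2])
  show ?thesis
  proof (rule set_eqI, rule iffI)
    fix z :: "int \<Rightarrow> int \<Rightarrow> 'a" assume "z \<in> pm (U12 m)"
    then have "z \<in> {ZZ m 1 c 0 | c. True} \<or> z \<in> mneg ` {ZZ m 1 c 0 | c. True}"
      unfolding pm_def U by blast
    then show "z \<in> {ZZ m a c 0 | a c. a = 1 \<or> a = -1}"
    proof
      assume "z \<in> {ZZ m 1 c 0 | c. True}" then show ?thesis by blast
    next
      assume "z \<in> mneg ` {ZZ m 1 c 0 | c. True}"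
      then obtain c where "z = ZZ m (-1) (-c) 0" by (auto simp: mneg_ZZ)
      then show ?thesis by blast
    qed
  next
    fix z :: "int \<Rightarrow> int \<Rightarrow> 'a" assume "z \<in> {ZZ m a c 0 | a c. a = 1 \<or> a = -1}"
    then obtain a c where z: "z = ZZ m a c 0" and a: "a = 1 \<or> a = -1" by blast
    show "z \<in> pm (U12 m)"
    proof (cases "a = 1")
      case True then show ?thesis using z unfolding pm_def U by blast
    next
      case False
      then have "z = mneg (ZZ m 1 (-c) 0)" using z a by (simp add: mneg_ZZ)
      then show ?thesis unfolding pm_def U by blast
    qed
  qed
qed

lemma setmul_eq:
  shows "2 \<le> m \<Longrightarrow> setmul m (pm (U12 m)) (range (phi m)) = {ZZ m a c s | a c s. (a::'a::comm_ring_1) = 1 \<or> a = -1}"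
proof -
  assume m2: "2 \<le> m"
  show ?thesis
  proof (rule set_eqI, rule iffI)
    fix z :: "int \<Rightarrow> int \<Rightarrow> 'a" assume "z \<in> setmul m (pm (U12 m)) (range (phi m))"
    then obtain X s where z: "z = mmul m X (phi m s)" and X: "X \<in> pm (U12 m)"
      by (auto simp: setmul_def)
    have "X \<in> {ZZ m a c 0 | a c. a = 1 \<or> a = -1}" using X unfolding pm_U12[OF m2] .
    then obtain a c where Xa: "X = ZZ m a c 0" and a: "a = 1 \<or> a = -1" by blast
    have "z = ZZ m a c (a*s)" using z Xa by (simp add: phi_ZZ[OF m2] ZZ_mul[OF m2])
    then show "z \<in> {ZZ m a c s | a c s. (a::'a) = 1 \<or> a = -1}" using a by blast
  next
    fix z :: "int \<Rightarrow> int \<Rightarrow> 'a" assume "z \<in> {ZZ m a c s | a c s. (a::'a) = 1 \<or> a = -1}"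
    then obtain a c s where z: "z = ZZ m a c s" and a: "a = 1 \<or> a = -1" by blast
    have aa: "a * a = 1" using a by auto
    have "mmul m (ZZ m a c 0) (phi m (a*s)) = ZZ m a c (a*(a*s))"
      by (simp add: phi_ZZ[OF m2] ZZ_mul[OF m2])
    also have "a*(a*s) = s" using aa by (simp add: mult.assoc[symmetric])
    finally have "z = mmul m (ZZ m a c 0) (phi m (a*s))" using z by simp
    moreover have "ZZ m a c 0 \<in> pm (U12 m)" using pm_U12[OF m2] a by blast
    ultimately show "z \<in> setmul m (pm (U12 m)) (range (phi m))" by (auto simp: setmul_def)
  qed
qed

theorem proposition8p3:
  fixes m :: nat and r :: "'a::idom"
  assumes "m \<ge> 2" and "r \<noteq> 0"
  shows "centre m (centralizer m (Sp m) (madd (mone m) (msmult r (alpha 1 2))))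
           \<subseteq> setmul m (pm (U12 m)) (range (phi m))
       \<and> ((\<exists>u::'a. u dvd 1 \<and> u \<noteq> 1 \<and> u \<noteq> -1) \<longrightarrow>
           centre m (centralizer m (Sp m) (madd (mone m) (msmult r (alpha 1 2)))) = pm (U12 m))
       \<and> ((\<forall>u::'a. u dvd 1 \<longrightarrow> u = 1 \<or> u = -1) \<and> (2::'a) \<noteq> 0 \<longrightarrow>
           centre m (centralizer m (Sp m) (madd (mone m) (msmult r (alpha 1 2))))
             = setmul m (pm (U12 m)) (range (phi m)))"
proof -
  note m2 = assms(1) and r = assms(2)
  let ?C = "centralizer m (Sp m) (madd (mone m) (msmult r (alpha 1 2)))"
  have id: "1 \<in> idx m" "-1 \<in> idx m" "2 \<in> idx m" "-2 \<in> idx m" using idx12[OF m2] by auto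
  have P1: "centre m ?C \<subseteq> setmul m (pm (U12 m)) (range (phi m))"
  proof
    fix z assume "z \<in> centre m ?C"
    then obtain a p x where aa: "a * a = 1" and z: "z = ZZ m a p x" using upper[OF m2 r] by blast
    then have "a = 1 \<or> a = -1" by (simp add: square_eq_1_iff)
    then show "z \<in> setmul m (pm (U12 m)) (range (phi m))" using z setmul_eq[OF m2] by blast
  qed
  have P2: "centre m ?C = pm (U12 m)" if ex: "\<exists>u::'a. u dvd 1 \<and> u \<noteq> 1 \<and> u \<noteq> -1"
  proof
    show "pm (U12 m) \<subseteq> centre m ?C"
    proof
      fix z :: "int \<Rightarrow> int \<Rightarrow> 'a" assume "z \<in> pm (U12 m)"
      then have "z \<in> {ZZ m a c 0 | a c. a = 1 \<or> a = -1}" unfolding pm_U12[OF m2] .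
      then obtain a c where z: "z = ZZ m a c 0" and a: "a = 1 \<or> a = -1" by blast
      have "a * a = 1" using a by auto
      then show "z \<in> centre m ?C" using ZZ_in_centre[OF m2 r] z by blast
    qed
  next
    show "centre m ?C \<subseteq> pm (U12 m)"
    proof
      fix z assume zc: "z \<in> centre m ?C"
      then obtain a p x where aa: "a * a = 1" and z: "z = ZZ m a p x" using upper[OF m2 r] by blast
      obtain u :: 'a where u: "u dvd 1" "u \<noteq> 1" "u \<noteq> -1" using ex by blast
      from u(1) obtain u' where uu: "1 = u * u'" by (rule dvdE)
      have "madd (mone m) (PT u u') \<in> Sp m"
        using PT_sp[OF m2 uu[symmetric]] is_mat_PT[OF m2, of u u'] unfolding Sp_def
        by (simp add: is_mat_madd)
      then have tC: "madd (mone m) (PT u u') \<in> ?C"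
        using cent_char[OF m2 r] PT_comm[OF m2] by blast
      have zm: "is_mat m z" using z is_mat_ZZ[OF m2] by simp
      have "mmul m z (madd (mone m) (PT u u')) = mmul m (madd (mone m) (PT u u')) z"
        using zc tC by (auto simp: centre_def)
      then have e: "mmul m z (PT u u') 1 (-1) = mmul m (PT u u') z 1 (-1)"
        by (rule test_entry[OF zm is_mat_PT[OF m2]])
      have "(u' - 1) * z 1 (-1) = (u - 1) * z 1 (-1)"
        using e id by (simp add: PT_def mm_simps; simp add: madd_def msmult_def)
      then have "u' * x = u * x" using z by (simp add: ZZ_pt[OF m2] algebra_simps)
      moreover have "u' \<noteq> u"
      proof
        assume "u' = u"
        then have "u * u = 1" using uu by simp
        then show False using u by (simp add: square_eq_1_iff)
      qed
      ultimately have "x = 0" by simp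
      then have "z = ZZ m a p 0" using z by simp
      moreover have "a = 1 \<or> a = -1" using aa by (simp add: square_eq_1_iff)
      ultimately show "z \<in> pm (U12 m)" using pm_U12[OF m2] by blast
    qed
  qed
  have P3: "centre m ?C = setmul m (pm (U12 m)) (range (phi m))"
    if hyp: "(\<forall>u::'a. u dvd 1 \<longrightarrow> u = 1 \<or> u = -1) \<and> (2::'a) \<noteq> 0"
  proof
    show "centre m ?C \<subseteq> setmul m (pm (U12 m)) (range (phi m))" by (rule P1)
  next
    show "setmul m (pm (U12 m)) (range (phi m)) \<subseteq> centre m ?C"
    proof
      fix z :: "int \<Rightarrow> int \<Rightarrow> 'a" assume "z \<in> setmul m (pm (U12 m)) (range (phi m))"
      then have "z \<in> {ZZ m a c s | a c s. (a::'a) = 1 \<or> a = -1}" unfolding setmul_eq[OF m2] .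
      then obtain a c s where z: "z = ZZ m a c s" and a: "a = 1 \<or> a = -1" by blast
      have "a * a = 1" using a by auto
      then show "z \<in> centre m ?C" using ZZ_in_centre[OF m2 r _ disjI2[OF hyp]] z by blast
    qed
  qed
  show ?thesis using P1 P2 P3 by blast
qed


end
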